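(* Let $n\ge 1$ and $m\ge 1$ be integers and let $H_m(\mathbb B)$ be the analytic functional Hilbert space on the open unit ball $\mathbb B\subset\mathbb C^n$ with reproducing kernel $K_m(z,w)=(1-\langle z,w\rangle)^{-m}$. For each multiindex $\gamma\in\mathbb N^n$, with $M_z^\gamma=M_{z_1}^{\gamma_1}\cdots M_{z_n}^{\gamma_n}\in L(H_m(\mathbb B))$, \[ M^{\prime *}_z (M^{\gamma}_z) M^\prime_z = P_{{\rm Im}M^*_z}\Big(\oplus\sum^{m-1}_{j=0}(-1)^j\binom{m}{j+1}\sigma^j_{M_z}(M^{\gamma}_z)\Big)P_{{\rm Im}M^*_z}. \]
   Context: $H_m(\mathbb B)=\{f=\sum_{\alpha\in\mathbb N^n}f_\alpha z^\alpha\in\mathcal O(\mathbb B):\ \|f\|^2=\sum_\alpha |f_\alpha|^2/\rho_m(\alpha)<\infty\}$ with $\rho_m(\alpha)=\frac{(m+|\alpha|-1)!}{\alpha!(m-1)!}$. $M_{z_i}$ is multiplication by $z_i$ on $H_m(\mathbb B)$. Let $\mathbb H_k$ denote the space of homogeneous polynomials of degree $k$, so $H_m(\mathbb B)$ is the orthogonal sum of the $\mathbb H_k$, and every $f$ has homogeneous expansion $f=\sum_k f_k$, $f_k\in\mathbb H_k$. $M_z:H_m(\mathbb B)^n\to H_m(\mathbb B)$, $(f_i)\mapsto\sum_i z_if_i$, is the row multiplication operator (it has closed range), $M_z^*:H_m(\mathbb B)\to H_m(\mathbb B)^n$, $f\mapsto (M_{z_i}^*f)_i$, is its adjoint, and $P_{{\rm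 Im}M_z^*}$ is the orthogonal projection of $H_m(\mathbb B)^n$ onto the closed range of $M_z^*$. Let $\delta\in L(H_m(\mathbb B))$ be the diagonal operator $\delta(\sum_k f_k)=f_0+\sum_{k\ge1}\frac{m+k-1}{k}f_k$, and define $M_z'=\delta M_z:H_m(\mathbb B)^n\to H_m(\mathbb B)$, with adjoint $M_z'^*$. For $X\in L(H_m(\mathbb B))$, $\sigma_{M_z}(X)=\sum_{i=1}^n M_{z_i}XM_{z_i}^*$, $\sigma^j_{M_z}$ is its $j$-th iterate ($\sigma^0_{M_z}(X)=X$), and $\oplus X$ denotes $X\oplus\cdots\oplus X$ ($n$ copies) on $H_m(\mathbb B)^n$. *)

theory Defs
  imports "HOL-Analysis.Analysis"
begin

text \<open>Model: the coordinates of C^n are indexed by a finite type 'n (n = CARD('n) >= 1).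
  An element of H_m(B) is identified with its family of Taylor coefficients
  f :: ('n => nat) => complex (multiindex alpha |-> f_alpha).\<close>

type_synonym 'n coeffs = "('n \<Rightarrow> nat) \<Rightarrow> complex"

definition mabs :: "('n::finite \<Rightarrow> nat) \<Rightarrow> nat" where
  "mabs \<alpha> = (\<Sum>i\<in>UNIV. \<alpha> i)"

definition mfact :: "('n::finite \<Rightarrow> nat) \<Rightarrow> nat" where
  "mfact \<alpha> = (\<Prod>i\<in>UNIV. fact (\<alpha> i))"

definition rho :: "nat \<Rightarrow> ('n::finite \<Rightarrow> nat) \<Rightarrow> real" where
  "rho m \<alpha> = fact (m + mabs \<alpha> - 1) / (real (mfact \<alpha>) * fact (m - 1))"

definition Hm :: "nat \<Rightarrow> ('n::finite) coeffs set" where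
  "Hm m = {f. (\<lambda>\<alpha>. (cmod (f \<alpha>))\<^sup>2 / rho m \<alpha>) summable_on UNIV}"

definition hinner :: "nat \<Rightarrow> ('n::finite) coeffs \<Rightarrow> 'n coeffs \<Rightarrow> complex" where
  "hinner m f g = (\<Sum>\<^sub>\<infinity>\<alpha>. f \<alpha> * cnj (g \<alpha>) / complex_of_real (rho m \<alpha>))"

definition Hmn :: "nat \<Rightarrow> ('n::finite \<Rightarrow> 'n coeffs) set" where
  "Hmn m = {F. \<forall>i. F i \<in> Hm m}"

definition hinner_n :: "nat \<Rightarrow> ('n::finite \<Rightarrow> 'n coeffs) \<Rightarrow> ('n \<Rightarrow> 'n coeffs) \<Rightarrow> complex" where
  "hinner_n m F G = (\<Sum>i\<in>UNIV. hinner m (F i) (G i))"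

text \<open>Multiplication by the monomial z^gamma, i.e. M_z^gamma.\<close>
definition Mzpow :: "('n::finite \<Rightarrow> nat) \<Rightarrow> 'n coeffs \<Rightarrow> 'n coeffs" where
  "Mzpow \<gamma> f = (\<lambda>\<alpha>. if (\<forall>i. \<gamma> i \<le> \<alpha> i) then f (\<lambda>i. \<alpha> i - \<gamma> i) else 0)"

definition Mz :: "'n::finite \<Rightarrow> 'n coeffs \<Rightarrow> 'n coeffs" where
  "Mz i = Mzpow (\<lambda>k. if k = i then 1 else 0)"

definition adjoint :: "'a set \<Rightarrow> ('a \<Rightarrow> 'a \<Rightarrow> complex) \<Rightarrow> ('b \<Rightarrow> 'b \<Rightarrow> complex)
    \<Rightarrow> ('a \<Rightarrow> 'b) \<Rightarrow> 'b \<Rightarrow> 'a" where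
  "adjoint S1 ip1 ip2 A = (\<lambda>g. THE h. h \<in> S1 \<and> (\<forall>f\<in>S1. ip2 (A f) g = ip1 f h))"

definition Mz_adj :: "nat \<Rightarrow> 'n::finite \<Rightarrow> 'n coeffs \<Rightarrow> 'n coeffs" where
  "Mz_adj m i = adjoint (Hm m) (hinner m) (hinner m) (Mz i)"

definition Mrow :: "('n::finite \<Rightarrow> 'n coeffs) \<Rightarrow> 'n coeffs" where
  "Mrow F = (\<lambda>\<alpha>. \<Sum>i\<in>UNIV. Mz i (F i) \<alpha>)"

definition Mz_star :: "nat \<Rightarrow> 'n::finite coeffs \<Rightarrow> ('n \<Rightarrow> 'n coeffs)" where
  "Mz_star m f = (\<lambda>i. Mz_adj m i f)"

definition delta :: "nat \<Rightarrow> 'n::finite coeffs \<Rightarrow> 'n coeffs" where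
  "delta m f = (\<lambda>\<alpha>. if mabs \<alpha> = 0 then f \<alpha>
       else of_nat (m + mabs \<alpha> - 1) / of_nat (mabs \<alpha>) * f \<alpha>)"

definition Mrow' :: "nat \<Rightarrow> ('n::finite \<Rightarrow> 'n coeffs) \<Rightarrow> 'n coeffs" where
  "Mrow' m F = delta m (Mrow F)"

definition Mrow'_adj :: "nat \<Rightarrow> 'n::finite coeffs \<Rightarrow> ('n \<Rightarrow> 'n coeffs)" where
  "Mrow'_adj m = adjoint (Hmn m) (hinner_n m) (hinner m) (Mrow' m)"

definition ipclosure :: "('a::minus) set \<Rightarrow> ('a \<Rightarrow> 'a \<Rightarrow> complex) \<Rightarrow> 'a set \<Rightarrow> 'a set" where
  "ipclosure S ip V = {x\<in>S. \<forall>e>0. \<exists>v\<in>V. sqrt (Re (ip (x - v) (x - v))) < e}"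

definition oproj :: "('a::minus) set \<Rightarrow> ('a \<Rightarrow> 'a \<Rightarrow> complex) \<Rightarrow> 'a set \<Rightarrow> 'a \<Rightarrow> 'a" where
  "oproj S ip V x = (THE p. p \<in> ipclosure S ip V \<and> (\<forall>v\<in>ipclosure S ip V. ip (x - p) v = 0))"

definition P_ImMzstar :: "nat \<Rightarrow> ('n::finite \<Rightarrow> 'n coeffs) \<Rightarrow> ('n \<Rightarrow> 'n coeffs)" where
  "P_ImMzstar m = oproj (Hmn m) (hinner_n m) (Mz_star m ` Hm m)"

definition sigma :: "nat \<Rightarrow> ('n::finite coeffs \<Rightarrow> 'n coeffs) \<Rightarrow> ('n coeffs \<Rightarrow> 'n coeffs)" where
  "sigma m X = (\<lambda>f \<alpha>. \<Sum>i\<in>UNIV. Mz i (X (Mz_adj m i f)) \<alpha>)"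

definition oplus_n :: "('n::finite coeffs \<Rightarrow> 'n coeffs) \<Rightarrow> ('n \<Rightarrow> 'n coeffs) \<Rightarrow> ('n \<Rightarrow> 'n coeffs)" where
  "oplus_n X = (\<lambda>F i. X (F i))"

definition binsum :: "nat \<Rightarrow> ('n::finite coeffs \<Rightarrow> 'n coeffs) \<Rightarrow> ('n coeffs \<Rightarrow> 'n coeffs)" where
  "binsum m X = (\<lambda>f \<alpha>. \<Sum>j<m. (-1)^j * of_nat (m choose (j + 1)) * ((sigma m ^^ j) X) f \<alpha>)"

end

theory Submission
  imports Defs "HOL-Computational_Algebra.Formal_Power_Series"
begin

definition eu :: "'n::finite \<Rightarrow> 'n \<Rightarrow> nat" where
  "eu i = (\<lambda>k. if k = i then 1 else 0)"

abbreviation up :: "('n::finite \<Rightarrow> nat) \<Rightarrow> 'n \<Rightarrow> ('n \<Rightarrow> nat)" where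
  "up \<alpha> i \<equiv> \<alpha>(i := Suc (\<alpha> i))"

lemma Mz_apply: "Mz i f \<alpha> = (if 1 \<le> \<alpha> i then f (\<alpha>(i := \<alpha> i - 1)) else 0)"
proof -
  have "(\<forall>k. (if k = i then 1 else 0) \<le> \<alpha> k) = (1 \<le> \<alpha> i)" by auto
  moreover have "(\<lambda>k. \<alpha> k - (if k = i then 1 else 0)) = \<alpha>(i := \<alpha> i - 1)" by auto
  ultimately show ?thesis unfolding Mz_def Mzpow_def by simp
qed

lemma Mz_up: "Mz i f (up \<alpha> i) = f \<alpha>"
  by (simp add: Mz_apply)

lemma sum_upd: fixes \<alpha> :: "'n::finite \<Rightarrow> nat" shows "(\<Sum>k\<in>UNIV. (\<alpha>(i := x)) k) = (\<Sum>k\<in>UNIV. \<alpha> k) - \<alpha> i + (x::nat)"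
proof -
  have A: "(\<Sum>k\<in>UNIV. \<beta> k) = \<beta> i + (\<Sum>k\<in>UNIV-{i}. \<beta> k)" for \<beta> :: "'n \<Rightarrow> nat"
    by (rule sum.remove) auto
  have B: "(\<Sum>k\<in>UNIV-{i}. (\<alpha>(i := x)) k) = (\<Sum>k\<in>UNIV-{i}. \<alpha> k)"
    by (rule sum.cong) auto
  show ?thesis using A[of "\<alpha>(i:=x)"] A[of \<alpha>] B by simp
qed

lemma mabs_up: "mabs (up \<alpha> i) = Suc (mabs \<alpha>)"
proof -
  have "\<alpha> i \<le> mabs \<alpha>" unfolding mabs_def
    by (rule member_le_sum) auto
  then show ?thesis unfolding mabs_def using sum_upd[of \<alpha> i "Suc (\<alpha> i)"] by simp
qed

lemma mabs_ge: "\<alpha> i \<le> mabs \<alpha>"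
  unfolding mabs_def by (rule member_le_sum) auto

lemma mfact_up: "mfact (up \<alpha> i) = mfact \<alpha> * Suc (\<alpha> i)"
proof -
  have A: "(\<Prod>k\<in>UNIV. \<beta> k) = \<beta> i * (\<Prod>k\<in>UNIV-{i}. \<beta> k)" for \<beta> :: "'a \<Rightarrow> nat"
    by (rule prod.remove) auto
  have B: "(\<Prod>k\<in>UNIV-{i}. fact ((up \<alpha> i) k)) = (\<Prod>k\<in>UNIV-{i}. (fact (\<alpha> k)::nat))"
    by (rule prod.cong) auto
  show ?thesis unfolding mfact_def
    using A[of "\<lambda>k. fact ((up \<alpha> i) k)"] A[of "\<lambda>k. fact (\<alpha> k)"] B by (simp add: algebra_simps)
qed

lemma mfact_pos: "mfact \<alpha> > 0"
  unfolding mfact_def by (simp add: prod_pos)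

lemma rho_pos: "m \<ge> 1 \<Longrightarrow> rho m \<alpha> > 0"
  unfolding rho_def using mfact_pos[of \<alpha>] by simp

lemma rho_up: assumes "m \<ge> 1"
  shows "rho m (up \<alpha> i) * Suc (\<alpha> i) = rho m \<alpha> * (m + mabs \<alpha>)"
proof -
  have f: "(fact (m + mabs \<alpha>) :: real) = (m + mabs \<alpha>) * fact (m + mabs \<alpha> - 1)"
    using assms by (metis Suc_diff_1 add_gr_0 fact_Suc of_nat_fact less_le_trans zero_less_one of_nat_mult)
  define D where "D = real (mfact \<alpha>) * fact (m - 1)"
  have D: "D > 0" unfolding D_def using mfact_pos[of \<alpha>] by simp
  have r1: "rho m \<alpha> = fact (m + mabs \<alpha> - 1) / D" unfolding rho_def D_def by simp
  have r2: "rho m (up \<alpha> i) = (m + mabs \<alpha>) * fact (m + mabs \<alpha> - 1) / (D * Suc (\<alpha> i))"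
    unfolding rho_def mabs_up mfact_up D_def using f by (simp add: algebra_simps)
  have g: "\<And>X Y s. s > 0 \<Longrightarrow> (X * Y) / (D * s) * s = Y / D * X" using D by (simp add: field_simps)
  show ?thesis unfolding r1 r2 of_nat_mult using g[of "real (Suc (\<alpha> i))"] by simp
qed

lemma rho_up_le: assumes "m \<ge> 1" shows "rho m \<alpha> \<le> rho m (up \<alpha> i)"
proof -
  have "Suc (\<alpha> i) \<le> m + mabs \<alpha>" using mabs_ge[of \<alpha> i] assms by simp
  then have "rho m \<alpha> * Suc (\<alpha> i) \<le> rho m \<alpha> * (m + mabs \<alpha>)"
    using rho_pos[OF assms, of \<alpha>] by (intro mult_left_mono) auto
  also have "\<dots> = rho m (up \<alpha> i) * Suc (\<alpha> i)" using rho_up[OF assms, of \<alpha> i] by linarith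
  finally show ?thesis by simp
qed

lemma rho_mono_add: assumes "m \<ge> 1"
  shows "rho m \<beta> \<le> rho m (\<lambda>k. \<beta> k + \<gamma> k)"
proof (induction "mabs \<gamma>" arbitrary: \<gamma>)
  case 0
  then have "\<gamma> k = 0" for k unfolding mabs_def by simp
  then show ?case by simp
next
  case (Suc n)
  then obtain i where i: "\<gamma> i > 0" unfolding mabs_def
    by (metis (no_types, lifting) Zero_not_Suc gr0I sum.neutral)
  define \<gamma>' where "\<gamma>' = \<gamma>(i := \<gamma> i - 1)"
  have "mabs \<gamma>' = n" using Suc(2) i sum_upd[of \<gamma> i "\<gamma> i - 1"] mabs_ge[of \<gamma> i] unfolding \<gamma>'_def mabs_def by simp
  then have "rho m \<beta> \<le> rho m (\<lambda>k. \<beta> k + \<gamma>' k)" using Suc(1) by simp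
  also have "\<dots> \<le> rho m (up (\<lambda>k. \<beta> k + \<gamma>' k) i)" by (rule rho_up_le[OF assms])
  also have "up (\<lambda>k. \<beta> k + \<gamma>' k) i = (\<lambda>k. \<beta> k + \<gamma> k)"
    using i unfolding \<gamma>'_def by auto
  finally show ?case .
qed

definition nrm2 :: "nat \<Rightarrow> 'n::finite coeffs \<Rightarrow> ('n \<Rightarrow> nat) \<Rightarrow> real" where
  "nrm2 m f = (\<lambda>\<alpha>. (cmod (f \<alpha>))\<^sup>2 / rho m \<alpha>)"

lemma Hm_iff: "f \<in> Hm m \<longleftrightarrow> nrm2 m f summable_on UNIV"
  unfolding Hm_def nrm2_def by simp

lemma nrm2_nonneg: "m \<ge> 1 \<Longrightarrow> nrm2 m f \<alpha> \<ge> 0"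
  unfolding nrm2_def using rho_pos[of m \<alpha>] by simp

lemma Hm_comp:
  assumes m: "m \<ge> 1" and f: "f \<in> Hm m" and inj: "inj_on \<phi> S"
    and supp: "\<And>\<alpha>. \<alpha> \<notin> S \<Longrightarrow> h \<alpha> = 0"
    and bd: "\<And>\<alpha>. \<alpha> \<in> S \<Longrightarrow> nrm2 m h \<alpha> \<le> C * nrm2 m f (\<phi> \<alpha>)"
  shows "h \<in> Hm m"
proof -
  have "nrm2 m f summable_on (\<phi> ` S)"
    using f unfolding Hm_iff by (rule summable_on_subset_banach) auto
  then have "(nrm2 m f \<circ> \<phi>) summable_on S" using summable_on_reindex[OF inj] by blast
  then have "(\<lambda>\<alpha>. C * nrm2 m f (\<phi> \<alpha>)) summable_on S"
    by (intro summable_on_cmult_right) (simp add: o_def)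
  then have "nrm2 m h summable_on S"
    by (rule summable_on_comparison_test) (use bd nrm2_nonneg[OF m] in auto)
  moreover have "nrm2 m h summable_on S \<longleftrightarrow> nrm2 m h summable_on UNIV"
    by (rule summable_on_cong_neutral) (auto simp: nrm2_def supp)
  ultimately show ?thesis unfolding Hm_iff by simp
qed

lemma Hm_Mzpow: assumes m: "m \<ge> 1" and f: "f \<in> Hm m" shows "Mzpow \<gamma> f \<in> Hm m"
proof (rule Hm_comp[OF m f, where S = "{\<alpha>. \<forall>i. \<gamma> i \<le> \<alpha> i}" and \<phi> = "\<lambda>\<alpha> i. \<alpha> i - \<gamma> i" and C = 1])
  show "inj_on (\<lambda>\<alpha> i. \<alpha> i - \<gamma> i) {\<alpha>. \<forall>i. \<gamma> i \<le> \<alpha> i}"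
  proof (rule inj_onI)
    fix x y assume "x \<in> {\<alpha>. \<forall>i. \<gamma> i \<le> \<alpha> i}" "y \<in> {\<alpha>. \<forall>i. \<gamma> i \<le> \<alpha> i}"
      "(\<lambda>i. x i - \<gamma> i) = (\<lambda>i. y i - \<gamma> i)"
    then have "x i = y i" for i
    proof -
      have "\<gamma> i \<le> x i" "\<gamma> i \<le> y i" "x i - \<gamma> i = y i - \<gamma> i"
        using \<open>x \<in> _\<close> \<open>y \<in> _\<close> fun_cong[OF \<open>(\<lambda>i. x i - \<gamma> i) = _\<close>, of i] by auto
      then show ?thesis by arith
    qed
    then show "x = y" by auto
  qed
  show "Mzpow \<gamma> f \<alpha> = 0" if "\<alpha> \<notin> {\<alpha>. \<forall>i. \<gamma> i \<le> \<alpha> i}" for \<alpha>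
    using that unfolding Mzpow_def by auto
  show "nrm2 m (Mzpow \<gamma> f) \<alpha> \<le> 1 * nrm2 m f (\<lambda>i. \<alpha> i - \<gamma> i)" if "\<alpha> \<in> {\<alpha>. \<forall>i. \<gamma> i \<le> \<alpha> i}" for \<alpha>
  proof -
    have e: "(\<lambda>k. (\<alpha> k - \<gamma> k) + \<gamma> k) = \<alpha>" using that by auto
    have "rho m (\<lambda>i. \<alpha> i - \<gamma> i) \<le> rho m \<alpha>" using rho_mono_add[OF m, of "\<lambda>i. \<alpha> i - \<gamma> i" \<gamma>] e by simp
    moreover have "Mzpow \<gamma> f \<alpha> = f (\<lambda>i. \<alpha> i - \<gamma> i)" using that unfolding Mzpow_def by auto
    ultimately show ?thesis using rho_pos[OF m, of \<alpha>] rho_pos[OF m, of "\<lambda>i. \<alpha> i - \<gamma> i"] unfolding nrm2_def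
      by (simp add: divide_left_mono)
  qed
qed

definition mzadj :: "nat \<Rightarrow> 'n::finite \<Rightarrow> 'n coeffs \<Rightarrow> 'n coeffs" where
  "mzadj m i f = (\<lambda>\<alpha>. f (up \<alpha> i) * of_nat (Suc (\<alpha> i)) / of_nat (m + mabs \<alpha>))"

definition diag :: "(nat \<Rightarrow> complex) \<Rightarrow> 'n::finite coeffs \<Rightarrow> 'n coeffs" where
  "diag w f = (\<lambda>\<alpha>. w (mabs \<alpha>) * f \<alpha>)"

definition dw :: "nat \<Rightarrow> nat \<Rightarrow> complex" where
  "dw m k = (if k = 0 then 1 else of_nat (m + k - 1) / of_nat k)"

lemma delta_diag: "delta m = diag (dw m)"
  unfolding delta_def diag_def dw_def by (auto intro!: ext)

lemma Hm_mzadj: assumes m: "m \<ge> 1" and f: "f \<in> Hm m" shows "mzadj m i f \<in> Hm m"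
proof (rule Hm_comp[OF m f, where S = UNIV and \<phi> = "\<lambda>\<alpha>. up \<alpha> i" and C = 1])
  show "inj_on (\<lambda>\<alpha>. up \<alpha> i) UNIV"
  proof (rule inj_onI)
    fix x y :: "'a \<Rightarrow> nat" assume "up x i = up y i"
    then have "x k = y k" for k
    proof -
      have "(up x i) k = (up y i) k" using \<open>up x i = up y i\<close> by simp
      then show ?thesis by (cases "k = i") auto
    qed
    then show "x = y" by auto
  qed
  show "mzadj m i f \<alpha> = 0" if "\<alpha> \<notin> UNIV" for \<alpha> using that by simp
  show "nrm2 m (mzadj m i f) \<alpha> \<le> 1 * nrm2 m f (up \<alpha> i)" if "\<alpha> \<in> UNIV" for \<alpha>
  proof -
    define a where "a = real (Suc (\<alpha> i))"
    define b where "b = real (m + mabs \<alpha>)"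
    define r where "r = rho m \<alpha>"
    define r' where "r' = rho m (up \<alpha> i)"
    define c where "c = (cmod (f (up \<alpha> i)))\<^sup>2"
    have ab: "0 < a" "a \<le> b" using mabs_ge[of \<alpha> i] m unfolding a_def b_def by auto
    have r: "r > 0" "r' > 0" unfolding r_def r'_def using rho_pos[OF m] by auto
    have rr: "r' * a = r * b" unfolding r_def r'_def a_def b_def using rho_up[OF m] by simp
    have c: "c \<ge> 0" unfolding c_def by simp
    have "nrm2 m (mzadj m i f) \<alpha> = c * a^2 / b^2 / r"
      unfolding nrm2_def mzadj_def c_def a_def b_def r_def
      by (simp add: norm_mult norm_divide power_mult_distrib power_divide del: of_nat_Suc of_nat_add)
    also have "\<dots> = c / r' * (a / b)" using ab r rr by (simp add: field_simps power2_eq_square)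
    also have "\<dots> \<le> c / r' * 1" using ab r c by (intro mult_left_mono) auto
    finally show ?thesis unfolding nrm2_def c_def r'_def by simp
  qed
qed

lemma Hm_diag: assumes m: "m \<ge> 1" and f: "f \<in> Hm m" and w: "\<And>k. cmod (w k) \<le> C"
  shows "diag w f \<in> Hm m"
proof (rule Hm_comp[OF m f, where S = UNIV and \<phi> = id and C = "C^2"])
  show "nrm2 m (diag w f) \<alpha> \<le> C^2 * nrm2 m f (id \<alpha>)" if "\<alpha> \<in> UNIV" for \<alpha>
  proof -
    have "(cmod (w (mabs \<alpha>)))^2 \<le> C^2" using w[of "mabs \<alpha>"] by (intro power_mono) auto
    then have "(cmod (w (mabs \<alpha>)))^2 * (cmod (f \<alpha>))^2 \<le> C^2 * (cmod (f \<alpha>))^2"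
      by (intro mult_right_mono) auto
    then show ?thesis using rho_pos[OF m, of \<alpha>] unfolding nrm2_def diag_def
      by (simp add: norm_mult power_mult_distrib divide_right_mono)
  qed
qed auto

lemma dw_bound: assumes m: "m \<ge> 1" shows "cmod (dw m k) \<le> m"
proof (cases "k = 0")
  case True then show ?thesis using m by (simp add: dw_def)
next
  case False
  have "real (m + k - 1) \<le> real m * real k"
  proof -
    obtain a where a: "m = Suc a" using m by (cases m) auto
    obtain b where b: "k = Suc b" using False by (cases k) auto
    note a b
    then have "m + k - 1 \<le> m * k" by simp
    then show ?thesis by (metis of_nat_le_iff of_nat_mult)
  qed
  then have "real (m + k - 1) / real k \<le> m" using False by (simp add: divide_le_eq)
  moreover have "dw m k = complex_of_real (real (m + k - 1) / real k)" using False unfolding dw_def by simp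
  ultimately show ?thesis by (simp only: norm_of_real abs_of_nonneg) (simp add: abs_of_nonneg)
qed

lemma Hm_delta: "m \<ge> 1 \<Longrightarrow> f \<in> Hm m \<Longrightarrow> delta m f \<in> Hm m"
  unfolding delta_diag by (rule Hm_diag[OF _ _ dw_bound])

lemma Hm_zero: "(\<lambda>_. 0) \<in> Hm m"
  unfolding Hm_iff nrm2_def by simp

lemma cmod_add_sq: "(cmod (a + b))^2 \<le> 2 * (cmod a)^2 + 2 * (cmod b)^2"
proof -
  have "cmod (a + b) \<le> cmod a + cmod b" by (rule norm_triangle_ineq)
  then have "(cmod (a + b))^2 \<le> (cmod a + cmod b)^2" by (intro power_mono) auto
  also have "\<dots> \<le> 2 * (cmod a)^2 + 2 * (cmod b)^2"
    using sum_squares_ge_zero[of "cmod a - cmod b" 0] by (simp add: power2_eq_square algebra_simps)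
  finally show ?thesis .
qed

lemma Hm_add: assumes m: "m \<ge> 1" and "f \<in> Hm m" "g \<in> Hm m" shows "(\<lambda>\<alpha>. f \<alpha> + g \<alpha>) \<in> Hm m"
proof -
  have "(\<lambda>\<alpha>. 2 * nrm2 m f \<alpha> + 2 * nrm2 m g \<alpha>) summable_on UNIV"
    using assms unfolding Hm_iff by (intro summable_on_add summable_on_cmult_right)
  then show ?thesis unfolding Hm_iff
  proof (rule summable_on_comparison_test)
    fix \<alpha> show "nrm2 m (\<lambda>\<alpha>. f \<alpha> + g \<alpha>) \<alpha> \<le> 2 * nrm2 m f \<alpha> + 2 * nrm2 m g \<alpha>"
      using cmod_add_sq[of "f \<alpha>" "g \<alpha>"] rho_pos[OF m, of \<alpha>] unfolding nrm2_def
      by (simp add: add_divide_distrib[symmetric] divide_right_mono)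
  qed (use nrm2_nonneg[OF m] in auto)
qed

lemma Hm_cmult: assumes m: "m \<ge> 1" and "f \<in> Hm m" shows "(\<lambda>\<alpha>. c * f \<alpha>) \<in> Hm m"
proof -
  have "diag (\<lambda>_. c) f \<in> Hm m" by (rule Hm_diag[OF m assms(2), of _ "cmod c"]) auto
  then show ?thesis unfolding diag_def .
qed

lemma Hm_uminus: assumes m: "m \<ge> 1" and "f \<in> Hm m" shows "(\<lambda>\<alpha>. - f \<alpha>) \<in> Hm m"
  using Hm_cmult[OF assms, of "-1"] by simp

lemma Hm_diff: assumes m: "m \<ge> 1" and "f \<in> Hm m" "g \<in> Hm m" shows "(\<lambda>\<alpha>. f \<alpha> - g \<alpha>) \<in> Hm m"
  using Hm_add[OF m assms(2) Hm_uminus[OF m assms(3)]] by simp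

lemma Hm_sum: assumes m: "m \<ge> 1" and "finite I" and "\<And>i. i \<in> I \<Longrightarrow> F i \<in> Hm m"
  shows "(\<lambda>\<alpha>. \<Sum>i\<in>I. F i \<alpha>) \<in> Hm m"
  using assms(2,3)
proof (induction I rule: finite_induct)
  case empty then show ?case using Hm_zero by simp
next
  case (insert x I)
  then show ?case using Hm_add[OF m, of "F x" "\<lambda>\<alpha>. \<Sum>i\<in>I. F i \<alpha>"] by simp
qed

lemma Hm_Mz: "m \<ge> 1 \<Longrightarrow> f \<in> Hm m \<Longrightarrow> Mz i f \<in> Hm m"
  unfolding Mz_def by (rule Hm_Mzpow)

lemma Hm_Mrow: "m \<ge> 1 \<Longrightarrow> F \<in> Hmn m \<Longrightarrow> Mrow F \<in> Hm m"
  unfolding Mrow_def Hmn_def by (rule Hm_sum) (auto intro: Hm_Mz)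

definition hterm :: "nat \<Rightarrow> 'n::finite coeffs \<Rightarrow> 'n coeffs \<Rightarrow> ('n \<Rightarrow> nat) \<Rightarrow> complex" where
  "hterm m f g = (\<lambda>\<alpha>. f \<alpha> * cnj (g \<alpha>) / complex_of_real (rho m \<alpha>))"

lemma hinner_hterm: "hinner m f g = infsum (hterm m f g) UNIV"
  unfolding hinner_def hterm_def by simp

lemma prod_le_sq: "2 * (x * y) \<le> x^2 + (y::real)^2"
  using sum_squares_ge_zero[of "x - y" 0] by (simp add: power2_eq_square algebra_simps)

lemma hterm_abs_summable: fixes f g :: "'n::finite coeffs" assumes m: "m \<ge> 1" and f: "f \<in> Hm m" and g: "g \<in> Hm m"
  shows "(\<lambda>\<alpha>. norm (hterm m f g \<alpha>)) summable_on UNIV"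
proof -
  have s: "(\<lambda>\<alpha>. nrm2 m f \<alpha> + nrm2 m g \<alpha>) summable_on UNIV"
    using f g unfolding Hm_iff by (rule summable_on_add)
  then have s': "(\<lambda>\<alpha>. norm (nrm2 m f \<alpha> + nrm2 m g \<alpha>)) summable_on UNIV"
  proof -
    have "(\<lambda>\<alpha>. norm (nrm2 m f \<alpha> + nrm2 m g \<alpha>)) = (\<lambda>\<alpha>. nrm2 m f \<alpha> + nrm2 m g \<alpha>)"
      by (intro ext) (simp add: abs_of_nonneg add_nonneg_nonneg nrm2_nonneg[OF m])
    then show ?thesis using s by simp
  qed
  show ?thesis
  proof (rule Infinite_Sum.abs_summable_on_comparison_test[OF s'])
    fix \<alpha> :: "'n \<Rightarrow> nat"
    have r: "rho m \<alpha> > 0" by (rule rho_pos[OF m])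
    have "norm (hterm m f g \<alpha>) = cmod (f \<alpha>) * cmod (g \<alpha>) / rho m \<alpha>"
      unfolding hterm_def using r by (simp add: norm_mult norm_divide)
    also have "\<dots> \<le> ((cmod (f \<alpha>))^2 + (cmod (g \<alpha>))^2) / rho m \<alpha>"
    proof -
      have "0 \<le> cmod (f \<alpha>) * cmod (g \<alpha>)" by simp
      then have "cmod (f \<alpha>) * cmod (g \<alpha>) \<le> (cmod (f \<alpha>))^2 + (cmod (g \<alpha>))^2"
        using prod_le_sq[of "cmod (f \<alpha>)" "cmod (g \<alpha>)"] by linarith
      then show ?thesis using r by (intro divide_right_mono) auto
    qed
    also have "\<dots> = norm (nrm2 m f \<alpha> + nrm2 m g \<alpha>)"
      using nrm2_nonneg[OF m, of f \<alpha>] nrm2_nonneg[OF m, of g \<alpha>] unfolding nrm2_def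
      by (simp add: add_divide_distrib)
    finally show "norm (hterm m f g \<alpha>) \<le> norm (nrm2 m f \<alpha> + nrm2 m g \<alpha>)" .
  qed
qed

lemma hterm_summable: "m \<ge> 1 \<Longrightarrow> f \<in> Hm m \<Longrightarrow> g \<in> Hm m \<Longrightarrow> hterm m f g summable_on UNIV"
  by (rule abs_summable_summable[OF hterm_abs_summable])

lemma hinner_add_left: assumes m: "m \<ge> 1" and "f \<in> Hm m" "g \<in> Hm m" "h \<in> Hm m"
  shows "hinner m (\<lambda>\<alpha>. f \<alpha> + g \<alpha>) h = hinner m f h + hinner m g h"
proof -
  have "hterm m (\<lambda>\<alpha>. f \<alpha> + g \<alpha>) h = (\<lambda>\<alpha>. hterm m f h \<alpha> + hterm m g h \<alpha>)"
    unfolding hterm_def by (auto simp: add_divide_distrib distrib_right)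
  then show ?thesis unfolding hinner_hterm
    using infsum_add[OF hterm_summable[OF m assms(2,4)] hterm_summable[OF m assms(3,4)]] by simp
qed

lemma hinner_zero_left: "hinner m (\<lambda>_. 0) h = 0"
  unfolding hinner_def by simp

lemma hinner_sum_left: assumes m: "m \<ge> 1" and I: "finite I" and F: "\<And>i. i \<in> I \<Longrightarrow> F i \<in> Hm m"
  and h: "h \<in> Hm m"
  shows "hinner m (\<lambda>\<alpha>. \<Sum>i\<in>I. F i \<alpha>) h = (\<Sum>i\<in>I. hinner m (F i) h)"
  using I F
proof (induction I rule: finite_induct)
  case empty then show ?case by (simp add: hinner_zero_left)
next
  case (insert x I)
  have "hinner m (\<lambda>\<alpha>. \<Sum>i\<in>insert x I. F i \<alpha>) h = hinner m (\<lambda>\<alpha>. F x \<alpha> + (\<Sum>i\<in>I. F i \<alpha>)) h"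
    using insert by simp
  also have "\<dots> = hinner m (F x) h + hinner m (\<lambda>\<alpha>. \<Sum>i\<in>I. F i \<alpha>) h"
    by (rule hinner_add_left[OF m _ _ h]) (use insert Hm_sum[OF m] in auto)
  finally show ?case using insert by simp
qed

lemma hinner_uminus_left: assumes m: "m \<ge> 1" and "f \<in> Hm m" "h \<in> Hm m"
  shows "hinner m (\<lambda>\<alpha>. - f \<alpha>) h = - hinner m f h"
proof -
  have "hterm m (\<lambda>\<alpha>. - f \<alpha>) h = (\<lambda>\<alpha>. - hterm m f h \<alpha>)" unfolding hterm_def by auto
  then show ?thesis unfolding hinner_hterm by (simp add: infsum_uminus)
qed

lemma hinner_diff_left: assumes m: "m \<ge> 1" and "f \<in> Hm m" "g \<in> Hm m" "h \<in> Hm m"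
  shows "hinner m (\<lambda>\<alpha>. f \<alpha> - g \<alpha>) h = hinner m f h - hinner m g h"
  using hinner_add_left[OF m assms(2) Hm_uminus[OF m assms(3)] assms(4)]
    hinner_uminus_left[OF m assms(3,4)] by simp

lemma hinner_cnj: "hinner m g f = cnj (hinner m f g)"
proof -
  have "hterm m g f = (\<lambda>\<alpha>. cnj (hterm m f g \<alpha>))" unfolding hterm_def by (auto simp: mult.commute)
  then show ?thesis unfolding hinner_hterm by simp
qed

lemma hinner_diff_right: assumes m: "m \<ge> 1" and "f \<in> Hm m" "g \<in> Hm m" "h \<in> Hm m"
  shows "hinner m f (\<lambda>\<alpha>. g \<alpha> - h \<alpha>) = hinner m f g - hinner m f h"
  using hinner_diff_left[OF m assms(3,4,2)] hinner_cnj[of m f] by (metis complex_cnj_diff hinner_cnj)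

lemma hinner_self: assumes "f \<in> Hm m" shows "hinner m f f = complex_of_real (infsum (nrm2 m f) UNIV)"
proof -
  have "hterm m f f = (\<lambda>\<alpha>. complex_of_real (nrm2 m f \<alpha>))"
  proof
    fix \<alpha> show "hterm m f f \<alpha> = complex_of_real (nrm2 m f \<alpha>)"
      unfolding hterm_def nrm2_def using complex_norm_square[of "f \<alpha>"] by simp
  qed
  then show ?thesis unfolding hinner_hterm
    using infsumI[OF has_sum_of_real[OF has_sum_infsum[of "nrm2 m f" UNIV]]] assms unfolding Hm_iff by simp
qed

definition ind :: "('n::finite \<Rightarrow> nat) \<Rightarrow> 'n coeffs" where
  "ind \<beta> = (\<lambda>\<alpha>. if \<alpha> = \<beta> then 1 else 0)"

lemma Hm_ind: "ind \<beta> \<in> Hm m"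
  unfolding Hm_iff
  by (rule finite_nonzero_values_imp_summable_on) (rule finite_subset[of _ "{\<beta>}"], auto simp: nrm2_def ind_def)

lemma hinner_ind: "hinner m (ind \<beta>) g = cnj (g \<beta>) / complex_of_real (rho m \<beta>)"
proof -
  have "hinner m (ind \<beta>) g = infsum (hterm m (ind \<beta>) g) {\<beta>}"
    unfolding hinner_hterm by (rule infsum_cong_neutral) (auto simp: hterm_def ind_def)
  then show ?thesis by (simp add: hterm_def ind_def)
qed

lemma hinner_ext: assumes m: "m \<ge> 1" and "\<And>f. f \<in> Hm m \<Longrightarrow> hinner m f k1 = hinner m f k2"
  shows "k1 = k2"
proof
  fix \<beta>
  have "cnj (k1 \<beta>) / complex_of_real (rho m \<beta>) = cnj (k2 \<beta>) / complex_of_real (rho m \<beta>)"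
    using assms(2)[OF Hm_ind[of \<beta>]] unfolding hinner_ind .
  then show "k1 \<beta> = k2 \<beta>" using rho_pos[OF m, of \<beta>] by simp
qed

lemma nrm2_zero: assumes m: "m \<ge> 1" and f: "f \<in> Hm m" and z: "infsum (nrm2 m f) UNIV = 0"
  shows "f = (\<lambda>_. 0)"
proof
  fix \<beta>
  have "sum (nrm2 m f) {\<beta>} \<le> infsum (nrm2 m f) UNIV"
    by (rule finite_sum_le_infsum) (use f nrm2_nonneg[OF m] in \<open>auto simp: Hm_iff\<close>)
  then have "nrm2 m f \<beta> \<le> 0" using z by simp
  then have "nrm2 m f \<beta> = 0" using nrm2_nonneg[OF m, of f \<beta>] by simp
  then show "f \<beta> = 0" using rho_pos[OF m, of \<beta>] unfolding nrm2_def by simp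
qed

lemma hinner_bound: fixes f g :: "'n::finite coeffs" assumes m: "m \<ge> 1" and f: "f \<in> Hm m" and g: "g \<in> Hm m" and c: "c > 0"
  shows "cmod (hinner m f g) \<le> (c * infsum (nrm2 m f) UNIV + infsum (nrm2 m g) UNIV / c) / 2"
proof -
  have "cmod (hinner m f g) \<le> infsum (\<lambda>\<alpha>. norm (hterm m f g \<alpha>)) UNIV"
    unfolding hinner_hterm by (rule norm_infsum_bound[OF hterm_abs_summable[OF m f g]])
  also have "\<dots> \<le> infsum (\<lambda>\<alpha>. (c * nrm2 m f \<alpha> + nrm2 m g \<alpha> / c) / 2) UNIV"
  proof (rule infsum_mono)
    show "(\<lambda>\<alpha>. norm (hterm m f g \<alpha>)) summable_on UNIV"
      using hterm_abs_summable[OF m f g] by simp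
    show "(\<lambda>\<alpha>. (c * nrm2 m f \<alpha> + nrm2 m g \<alpha> / c) / 2) summable_on UNIV"
    proof -
      have "(\<lambda>\<alpha>. (c/2) * nrm2 m f \<alpha> + (1/(2*c)) * nrm2 m g \<alpha>) summable_on UNIV"
        using f g unfolding Hm_iff by (intro summable_on_add summable_on_cmult_right)
      moreover have "(\<lambda>\<alpha>. (c/2) * nrm2 m f \<alpha> + (1/(2*c)) * nrm2 m g \<alpha>) = (\<lambda>\<alpha>. (c * nrm2 m f \<alpha> + nrm2 m g \<alpha> / c) / 2)"
        by (auto intro!: ext simp: field_simps)
      ultimately show ?thesis by simp
    qed
    fix \<alpha> :: "'n \<Rightarrow> nat"
    have r: "rho m \<alpha> > 0" by (rule rho_pos[OF m])
    define x where "x = cmod (f \<alpha>)"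
    define y where "y = cmod (g \<alpha>)"
    have "2 * (x * y) \<le> c * x^2 + y^2 / c"
    proof -
      have "2 * ((c * x) * y) \<le> (c*x)^2 + y^2" by (rule prod_le_sq)
      then have "c * (2 * (x * y)) \<le> c * (c * x^2 + y^2 / c)" using c
        by (simp add: algebra_simps power2_eq_square)
      then show ?thesis using c by simp
    qed
    then have le: "x * y / rho m \<alpha> \<le> (c * x^2 + y^2 / c) / 2 / rho m \<alpha>"
      using r by (intro divide_right_mono) auto
    have "norm (hterm m f g \<alpha>) = x * y / rho m \<alpha>"
      unfolding hterm_def x_def y_def using r by (simp add: norm_mult norm_divide)
    also note le
    also have "(c * x^2 + y^2 / c) / 2 / rho m \<alpha> = (c * nrm2 m f \<alpha> + nrm2 m g \<alpha> / c) / 2"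
      unfolding nrm2_def x_def y_def using r by (simp add: field_simps)
    finally show "norm (hterm m f g \<alpha>) \<le> (c * nrm2 m f \<alpha> + nrm2 m g \<alpha> / c) / 2" .
  qed
  also have "\<dots> = (c * infsum (nrm2 m f) UNIV + infsum (nrm2 m g) UNIV / c) / 2"
  proof -
    have s1: "(\<lambda>\<alpha>. c * nrm2 m f \<alpha>) summable_on UNIV" using f unfolding Hm_iff by (rule summable_on_cmult_right)
    have s2: "(\<lambda>\<alpha>. nrm2 m g \<alpha> / c) summable_on UNIV" using g unfolding Hm_iff divide_inverse by (rule summable_on_cmult_left)
    have "infsum (\<lambda>\<alpha>. (c * nrm2 m f \<alpha> + nrm2 m g \<alpha> / c) / 2) UNIV
        = infsum (\<lambda>\<alpha>. c * nrm2 m f \<alpha> + nrm2 m g \<alpha> / c) UNIV / 2"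
      unfolding divide_inverse[of _ 2] by (rule infsum_cmult_left) (use s1 s2 in \<open>rule summable_on_add\<close>)
    also have "\<dots> = (infsum (\<lambda>\<alpha>. c * nrm2 m f \<alpha>) UNIV + infsum (\<lambda>\<alpha>. nrm2 m g \<alpha> / c) UNIV) / 2"
      by (simp add: infsum_add[OF s1 s2])
    also have "\<dots> = (c * infsum (nrm2 m f) UNIV + infsum (nrm2 m g) UNIV / c) / 2"
      using f g unfolding Hm_iff divide_inverse by (simp add: infsum_cmult_right infsum_cmult_left)
    finally show ?thesis .
  qed
  finally show ?thesis .
qed

lemma inj_up: "inj (\<lambda>\<alpha>. up \<alpha> i)"
proof (rule injI)
  fix x y :: "'a \<Rightarrow> nat" assume "up x i = up y i"
  then have "x k = y k" for k
  proof -
    have "(up x i) k = (up y i) k" using \<open>up x i = up y i\<close> by simp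
    then show ?thesis by (cases "k = i") auto
  qed
  then show "x = y" by auto
qed

lemma not_range_up: "\<alpha> \<notin> range (\<lambda>\<beta>. up \<beta> i) \<Longrightarrow> \<alpha> i = 0"
proof (rule ccontr)
  assume a: "\<alpha> \<notin> range (\<lambda>\<beta>. up \<beta> i)" "\<alpha> i \<noteq> 0"
  then have "\<alpha> = up (\<alpha>(i := \<alpha> i - 1)) i" by auto
  then show False using a by blast
qed

lemma Mz_adj_ident: assumes m: "m \<ge> 1" and f: "f \<in> Hm m" and h: "h \<in> Hm m"
  shows "hinner m (Mz i f) h = hinner m f (mzadj m i h)"
proof -
  have "hinner m (Mz i f) h = infsum (hterm m (Mz i f) h) (range (\<lambda>\<beta>. up \<beta> i))"
    unfolding hinner_hterm
    by (rule infsum_cong_neutral) (auto simp: hterm_def Mz_apply dest: not_range_up)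
  also have "\<dots> = infsum (hterm m (Mz i f) h \<circ> (\<lambda>\<beta>. up \<beta> i)) UNIV"
    by (rule infsum_reindex) (use inj_up in auto)
  also have "hterm m (Mz i f) h \<circ> (\<lambda>\<beta>. up \<beta> i) = hterm m f (mzadj m i h)"
  proof
    fix \<beta>
    define a where "a = real (Suc (\<beta> i))"
    define b where "b = real (m + mabs \<beta>)"
    have ab: "a > 0" "b > 0" using m unfolding a_def b_def by auto
    have r: "rho m \<beta> > 0" "rho m (up \<beta> i) > 0" by (rule rho_pos[OF m])+
    have rr: "rho m (up \<beta> i) * a = rho m \<beta> * b" unfolding a_def b_def using rho_up[OF m] by simp
    have e: "1 / complex_of_real (rho m (up \<beta> i)) = complex_of_real a / (complex_of_real b * complex_of_real (rho m \<beta>))"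
    proof -
      have "1 / rho m (up \<beta> i) = a / (b * rho m \<beta>)" using rr r ab by (simp add: field_simps)
      then show ?thesis by (metis of_real_1 of_real_divide of_real_mult)
    qed
    have "(hterm m (Mz i f) h \<circ> (\<lambda>\<beta>. up \<beta> i)) \<beta> = f \<beta> * cnj (h (up \<beta> i)) * (1 / complex_of_real (rho m (up \<beta> i)))"
      unfolding hterm_def o_def Mz_up by simp
    also have "\<dots> = f \<beta> * cnj (h (up \<beta> i)) * (complex_of_real a / (complex_of_real b * complex_of_real (rho m \<beta>)))"
      unfolding e ..
    also have "\<dots> = hterm m f (mzadj m i h) \<beta>"
      unfolding hterm_def mzadj_def a_def b_def by simp
    finally show "(hterm m (Mz i f) h \<circ> (\<lambda>\<beta>. up \<beta> i)) \<beta> = hterm m f (mzadj m i h) \<beta>" .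
  qed
  finally show ?thesis unfolding hinner_hterm .
qed

lemma Mz_adj_eq: assumes m: "m \<ge> 1" and h: "h \<in> Hm m" shows "Mz_adj m i h = mzadj m i h"
  unfolding Mz_adj_def adjoint_def
proof (rule the_equality)
  show "mzadj m i h \<in> Hm m \<and> (\<forall>f\<in>Hm m. hinner m (Mz i f) h = hinner m f (mzadj m i h))"
    using Hm_mzadj[OF m h] Mz_adj_ident[OF m _ h] by auto
  fix k assume k: "k \<in> Hm m \<and> (\<forall>f\<in>Hm m. hinner m (Mz i f) h = hinner m f k)"
  show "k = mzadj m i h"
    by (rule hinner_ext[OF m]) (use k Mz_adj_ident[OF m _ h] in auto)
qed

lemma Mrow_ident: assumes m: "m \<ge> 1" and F: "F \<in> Hmn m" and h: "h \<in> Hm m"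
  shows "hinner m (Mrow F) h = (\<Sum>i\<in>UNIV. hinner m (F i) (mzadj m i h))"
proof -
  have "hinner m (Mrow F) h = (\<Sum>i\<in>UNIV. hinner m (Mz i (F i)) h)"
    unfolding Mrow_def by (rule hinner_sum_left[OF m _ _ h]) (use F Hm_Mz[OF m] in \<open>auto simp: Hmn_def\<close>)
  also have "\<dots> = (\<Sum>i\<in>UNIV. hinner m (F i) (mzadj m i h))"
    using F Mz_adj_ident[OF m _ h] by (simp add: Hmn_def)
  finally show ?thesis .
qed

lemma cnj_dw: "cnj (dw m k) = dw m k"
  unfolding dw_def by simp

lemma hinner_delta: "hinner m (delta m u) g = hinner m u (delta m g)"
proof -
  have "hterm m (delta m u) g = hterm m u (delta m g)"
    unfolding hterm_def delta_diag diag_def by (auto intro!: ext simp: cnj_dw)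
  then show ?thesis unfolding hinner_hterm by simp
qed

lemma Hmn_ext: fixes k1 k2 :: "'n::finite \<Rightarrow> 'n coeffs" assumes m: "m \<ge> 1" and "\<And>F. F \<in> Hmn m \<Longrightarrow> hinner_n m F k1 = hinner_n m F k2"
  shows "k1 = k2"
proof
  fix i
  show "k1 i = k2 i"
  proof (rule hinner_ext[OF m])
    fix f :: "'n coeffs" assume f: "f \<in> Hm m"
    define F :: "'n \<Rightarrow> 'n coeffs" where "F = (\<lambda>j. if j = i then f else (\<lambda>_. 0))"
    have F: "F \<in> Hmn m" unfolding Hmn_def F_def using f Hm_zero by auto
    have "hinner_n m F k = hinner m f (k i)" for k :: "'n \<Rightarrow> 'n coeffs"
    proof -
      have "hinner_n m F k = (\<Sum>j\<in>UNIV. if j = i then hinner m f (k j) else 0)"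
        unfolding hinner_n_def F_def by (rule sum.cong) (auto simp: hinner_zero_left)
      then show ?thesis by simp
    qed
    then show "hinner m f (k1 i) = hinner m f (k2 i)" using assms(2)[OF F] by simp
  qed
qed

lemma Mrow'_adj_eq: assumes m: "m \<ge> 1" and g: "g \<in> Hm m"
  shows "Mrow'_adj m g = (\<lambda>i. mzadj m i (delta m g))"
  unfolding Mrow'_adj_def adjoint_def
proof (rule the_equality)
  have dg: "delta m g \<in> Hm m" by (rule Hm_delta[OF m g])
  have id: "hinner m (Mrow' m F) g = hinner_n m F (\<lambda>i. mzadj m i (delta m g))" if F: "F \<in> Hmn m" for F
    unfolding Mrow'_def hinner_delta hinner_n_def by (rule Mrow_ident[OF m F dg])
  show "(\<lambda>i. mzadj m i (delta m g)) \<in> Hmn m \<and> (\<forall>F\<in>Hmn m. hinner m (Mrow' m F) g = hinner_n m F (\<lambda>i. mzadj m i (delta m g)))"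
    using Hm_mzadj[OF m dg] id unfolding Hmn_def by auto
  fix k assume k: "k \<in> Hmn m \<and> (\<forall>F\<in>Hmn m. hinner m (Mrow' m F) g = hinner_n m F k)"
  show "k = (\<lambda>i. mzadj m i (delta m g))"
    by (rule Hmn_ext[OF m]) (use k id in auto)
qed

lemma mabs0: "mabs \<alpha> = 0 \<Longrightarrow> \<alpha> l = 0"
  using mabs_ge[of \<alpha> l] by simp

lemma up_down: "1 \<le> \<alpha> l \<Longrightarrow> up (\<alpha>(l := \<alpha> l - 1)) l = \<alpha>"
  by auto

lemma mabs_down: "1 \<le> \<alpha> l \<Longrightarrow> mabs (\<alpha>(l := \<alpha> l - 1)) = mabs \<alpha> - 1"
  using mabs_up[of "\<alpha>(l := \<alpha> l - 1)" l] up_down[of \<alpha> l] by simp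

lemma Mz_diag: "Mz l (diag w g) \<alpha> = w (mabs \<alpha> - 1) * Mz l g \<alpha>"
proof (cases "1 \<le> \<alpha> l")
  case True
  then show ?thesis unfolding Mz_apply diag_def using mabs_down[of \<alpha> l] True by simp
qed (simp add: Mz_apply)

lemma Mz_mzadj: "Mz l (mzadj m l v) \<alpha> = v \<alpha> * of_nat (\<alpha> l) / of_nat (m + mabs \<alpha> - 1)"
proof (cases "1 \<le> \<alpha> l")
  case True
  define \<beta> where "\<beta> = \<alpha>(l := \<alpha> l - 1)"
  have b1: "up \<beta> l = \<alpha>" unfolding \<beta>_def using up_down[of \<alpha> l] True by simp
  have b2: "mabs \<beta> = mabs \<alpha> - 1" unfolding \<beta>_def using mabs_down[of \<alpha> l] True by simp
  have b3: "Suc (\<beta> l) = \<alpha> l" unfolding \<beta>_def using True by simp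
  have b4: "m + mabs \<beta> = m + mabs \<alpha> - 1" unfolding b2 using True mabs_ge[of \<alpha> l] by simp
  have b1': "\<beta>(l := \<alpha> l) = \<alpha>" unfolding \<beta>_def by simp
  have "Mz l (mzadj m l v) \<alpha> = mzadj m l v \<beta>" unfolding Mz_apply \<beta>_def using True by simp
  also have "\<dots> = v \<alpha> * of_nat (\<alpha> l) / of_nat (m + mabs \<alpha> - 1)"
    by (simp only: mzadj_def b3 b1' b4)
  finally show ?thesis .
qed (simp add: Mz_apply)

lemma sum_Mz_mzadj: "(\<Sum>l\<in>UNIV. Mz l (mzadj m l v) \<alpha>) = v \<alpha> * of_nat (mabs \<alpha>) / of_nat (m + mabs \<alpha> - 1)"
  unfolding Mz_mzadj mabs_def
  by (simp add: sum_divide_distrib[symmetric] sum_distrib_left[symmetric])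

lemma row_proj: assumes m: "m \<ge> 1"
  shows "Mrow (\<lambda>l. mzadj m l (delta m (Mrow G))) = Mrow G"
proof
  fix \<alpha>
  show "Mrow (\<lambda>l. mzadj m l (delta m (Mrow G))) \<alpha> = Mrow G \<alpha>"
  proof (cases "mabs \<alpha> = 0")
    case True
    then show ?thesis unfolding Mrow_def by (simp add: Mz_apply mabs0)
  next
    case False
    have "Mrow (\<lambda>l. mzadj m l (delta m (Mrow G))) \<alpha>
        = delta m (Mrow G) \<alpha> * of_nat (mabs \<alpha>) / of_nat (m + mabs \<alpha> - 1)"
      unfolding Mrow_def[of "\<lambda>l. mzadj m l _"] by (rule sum_Mz_mzadj)
    also have "\<dots> = Mrow G \<alpha>"
    proof -
      have h: "\<And>a b X. a \<noteq> 0 \<Longrightarrow> b \<noteq> 0 \<Longrightarrow> a / b * X * b / a = (X::complex)" by simp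
      have "m + mabs \<alpha> - 1 \<noteq> 0" "mabs \<alpha> \<noteq> 0" using False m by auto
      then have "of_nat (m + mabs \<alpha> - 1) \<noteq> (0::complex)" "of_nat (mabs \<alpha>) \<noteq> (0::complex)"
        by (metis of_nat_eq_0_iff)+
      then show ?thesis unfolding delta_def using False h by simp
    qed
    finally show ?thesis .
  qed
qed

lemma Mrow_diff: "Mrow (F - H) = (\<lambda>\<alpha>. Mrow F \<alpha> - Mrow H \<alpha>)"
proof
  fix \<alpha>
  have "Mrow (F - H) \<alpha> = (\<Sum>i\<in>UNIV. Mz i (F i) \<alpha> - Mz i (H i) \<alpha>)"
    unfolding Mrow_def by (rule sum.cong) (auto simp: Mz_apply)
  then show "Mrow (F - H) \<alpha> = Mrow F \<alpha> - Mrow H \<alpha>" unfolding Mrow_def by (simp add: sum_subtractf)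
qed

lemma Hmn_diff: "m \<ge> 1 \<Longrightarrow> F \<in> Hmn m \<Longrightarrow> H \<in> Hmn m \<Longrightarrow> F - H \<in> Hmn m"
  unfolding Hmn_def fun_diff_def by (auto intro!: Hm_diff)

lemma hinner_n_diff_left: assumes m: "m \<ge> 1" and "F \<in> Hmn m" "G \<in> Hmn m" "H \<in> Hmn m"
  shows "hinner_n m (F - G) H = hinner_n m F H - hinner_n m G H"
  unfolding hinner_n_def fun_diff_def using assms unfolding Hmn_def
  by (simp add: hinner_diff_left[OF m] sum_subtractf)

lemma hinner_n_diff_right: assumes m: "m \<ge> 1" and "F \<in> Hmn m" "G \<in> Hmn m" "H \<in> Hmn m"
  shows "hinner_n m F (G - H) = hinner_n m F G - hinner_n m F H"
  unfolding hinner_n_def fun_diff_def using assms unfolding Hmn_def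
  by (simp add: hinner_diff_right[OF m] sum_subtractf)

definition Nn :: "nat \<Rightarrow> ('n::finite \<Rightarrow> 'n coeffs) \<Rightarrow> real" where
  "Nn m y = (\<Sum>i\<in>UNIV. infsum (nrm2 m (y i)) UNIV)"

lemma Nn_nonneg: "m \<ge> 1 \<Longrightarrow> Nn m y \<ge> 0"
  unfolding Nn_def by (intro sum_nonneg infsum_nonneg nrm2_nonneg)

lemma Re_hinner_n: assumes "y \<in> Hmn m" shows "Re (hinner_n m y y) = Nn m y"
  using assms unfolding hinner_n_def Nn_def Hmn_def by (simp add: hinner_self)

lemma hinner_n_bound: assumes m: "m \<ge> 1" and "x \<in> Hmn m" "y \<in> Hmn m" and c: "c > 0"
  shows "cmod (hinner_n m x y) \<le> (c * Nn m x + Nn m y / c) / 2"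
proof -
  have "cmod (hinner_n m x y) \<le> (\<Sum>i\<in>UNIV. cmod (hinner m (x i) (y i)))"
    unfolding hinner_n_def by (rule norm_sum)
  also have "\<dots> \<le> (\<Sum>i\<in>UNIV. (c * infsum (nrm2 m (x i)) UNIV + infsum (nrm2 m (y i)) UNIV / c) / 2)"
    by (rule sum_mono, rule hinner_bound[OF m _ _ c]) (use assms in \<open>auto simp: Hmn_def\<close>)
  also have "\<dots> = (c * Nn m x + Nn m y / c) / 2"
    unfolding Nn_def by (simp add: sum_divide_distrib[symmetric] sum_distrib_left[symmetric] sum.distrib)
  finally show ?thesis .
qed

lemma Nn_zero: assumes m: "m \<ge> 1" and y: "y \<in> Hmn m" and z: "Nn m y = 0" shows "y = (\<lambda>_ _. 0)"
proof
  fix i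
  have "\<forall>i\<in>UNIV. infsum (nrm2 m (y i)) UNIV = 0"
    using z unfolding Nn_def
    by (subst sum_nonneg_eq_0_iff[symmetric]) (auto intro: infsum_nonneg nrm2_nonneg[OF m])
  then have "y i = (\<lambda>_. 0)" using nrm2_zero[OF m] y unfolding Hmn_def by auto
  then show "y i = (\<lambda>_. 0)" by simp
qed

lemma orth_closure:
  assumes m: "m \<ge> 1" and x: "x \<in> Hmn m" and V: "V \<subseteq> Hmn m" and orth: "\<And>w. w \<in> V \<Longrightarrow> hinner_n m x w = 0"
    and v: "v \<in> ipclosure (Hmn m) (hinner_n m) V"
  shows "hinner_n m x v = 0"
proof -
  define K where "K = Nn m x"
  have K: "K \<ge> 0" unfolding K_def by (rule Nn_nonneg[OF m])
  have vH: "v \<in> Hmn m" using v unfolding ipclosure_def by auto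
  have bound: "cmod (hinner_n m x v) \<le> e * (K + 1) / 2" if e: "e > 0" for e
  proof -
    obtain w where w: "w \<in> V" and d: "sqrt (Re (hinner_n m (v - w) (v - w))) < e"
      using v e unfolding ipclosure_def by blast
    have wH: "w \<in> Hmn m" using w V by auto
    have dH: "v - w \<in> Hmn m" by (rule Hmn_diff[OF m vH wH])
    have N: "Nn m (v - w) < e^2"
    proof -
      have "sqrt (Nn m (v - w)) < e" using d Re_hinner_n[OF dH] by simp
      then have "(sqrt (Nn m (v - w)))^2 < e^2" using Nn_nonneg[OF m, of "v - w"] by (intro power_strict_mono) auto
      then show ?thesis using Nn_nonneg[OF m, of "v - w"] by simp
    qed
    have "hinner_n m x v = hinner_n m x (v - w)"
      using hinner_n_diff_right[OF m x vH wH] orth[OF w] by simp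
    then have "cmod (hinner_n m x v) \<le> (e * Nn m x + Nn m (v - w) / e) / 2"
      using hinner_n_bound[OF m x dH e] by simp
    also have "\<dots> \<le> (e * K + e) / 2"
    proof -
      have "Nn m (v - w) / e \<le> e^2 / e" using N e by (intro divide_right_mono) auto
      also have "e^2 / e = e" using e by (simp add: power2_eq_square)
      finally have a: "Nn m (v - w) / e \<le> e" .
      show ?thesis using a unfolding K_def by (intro divide_right_mono add_left_mono) auto
    qed
    finally show ?thesis by (simp add: algebra_simps)
  qed
  show ?thesis
  proof (rule ccontr)
    assume "hinner_n m x v \<noteq> 0"
    then have h: "cmod (hinner_n m x v) > 0" by simp
    define e where "e = cmod (hinner_n m x v) / (K + 1)"
    have e: "e > 0" unfolding e_def using h K by simp
    have "cmod (hinner_n m x v) \<le> e * (K + 1) / 2" by (rule bound[OF e])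
    also have "\<dots> = cmod (hinner_n m x v) / 2" unfolding e_def using K by simp
    finally show False using h by simp
  qed
qed

lemma Mz_star_eq: "m \<ge> 1 \<Longrightarrow> g \<in> Hm m \<Longrightarrow> Mz_star m g = (\<lambda>i. mzadj m i g)"
  unfolding Mz_star_def by (simp add: Mz_adj_eq)

lemma hinner_n_zero_left: "hinner_n m (\<lambda>_ _. 0) y = 0"
  unfolding hinner_n_def by (simp add: hinner_zero_left)

lemma self_diff: "(p::'a \<Rightarrow> 'b \<Rightarrow> complex) - p = (\<lambda>_ _. 0)"
  by (simp add: fun_diff_def)

lemma P_eq: fixes G :: "'n::finite \<Rightarrow> 'n coeffs" assumes m: "m \<ge> 1" and G: "G \<in> Hmn m"
  shows "P_ImMzstar m G = (\<lambda>i. mzadj m i (delta m (Mrow G)))"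
proof -
  define V :: "('n \<Rightarrow> 'n coeffs) set" where "V = Mz_star m ` Hm m"
  define C where "C = ipclosure (Hmn m) (hinner_n m) V"
  define p where "p = (\<lambda>i. mzadj m i (delta m (Mrow G)))"
  have u: "delta m (Mrow G) \<in> Hm m" by (rule Hm_delta[OF m Hm_Mrow[OF m G]])
  have pV: "p \<in> V" unfolding V_def p_def using Mz_star_eq[OF m u] u by (metis image_eqI)
  have VH: "V \<subseteq> Hmn m"
  proof
    fix w assume "w \<in> V"
    then obtain g where g: "g \<in> Hm m" and wg: "w = Mz_star m g" unfolding V_def by auto
    show "w \<in> Hmn m" unfolding wg Mz_star_eq[OF m g] Hmn_def using Hm_mzadj[OF m g] by simp
  qed
  have pH: "p \<in> Hmn m" using pV VH by auto
  have pC: "p \<in> C" unfolding C_def ipclosure_def using pH pV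
    by (auto intro!: bexI[of _ p] simp: hinner_n_zero_left self_diff)
  have CH: "C \<subseteq> Hmn m" unfolding C_def ipclosure_def by auto
  have orthV: "hinner_n m (G - p) w = 0" if w: "w \<in> V" for w
  proof -
    obtain g where g: "g \<in> Hm m" and wg: "w = Mz_star m g" using w unfolding V_def by auto
    have "hinner_n m (G - p) w = hinner m (Mrow (G - p)) g"
      unfolding wg Mz_star_eq[OF m g] hinner_n_def by (rule Mrow_ident[OF m Hmn_diff[OF m G pH] g, symmetric])
    also have "Mrow (G - p) = (\<lambda>_. 0)" unfolding Mrow_diff p_def row_proj[OF m] by simp
    finally show ?thesis by (simp only: hinner_zero_left)
  qed
  have orthC: "hinner_n m (G - p) v = 0" if "v \<in> C" for v
    by (rule orth_closure[OF m Hmn_diff[OF m G pH] VH orthV]) (use that C_def in auto)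
  have "oproj (Hmn m) (hinner_n m) V G = p"
    unfolding oproj_def C_def[symmetric]
  proof (rule the_equality)
    show "p \<in> C \<and> (\<forall>v\<in>C. hinner_n m (G - p) v = 0)" using pC orthC by auto
    fix q assume q: "q \<in> C \<and> (\<forall>v\<in>C. hinner_n m (G - q) v = 0)"
    have qH: "q \<in> Hmn m" using q CH by auto
    have Gp: "G - p \<in> Hmn m" and Gq: "G - q \<in> Hmn m" by (rule Hmn_diff[OF m G pH], rule Hmn_diff[OF m G qH])
    have e: "(G - p) - (G - q) = q - p" by (simp add: fun_diff_def)
    have "hinner_n m (q - p) (q - p) = hinner_n m ((G - p) - (G - q)) (q - p)" unfolding e ..
    also have "\<dots> = (hinner_n m (G - p) q - hinner_n m (G - p) p) - (hinner_n m (G - q) q - hinner_n m (G - q) p)"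
      by (simp add: hinner_n_diff_left[OF m Gp Gq Hmn_diff[OF m qH pH]] hinner_n_diff_right[OF m Gp qH pH]
          hinner_n_diff_right[OF m Gq qH pH])
    also have "\<dots> = 0" using q pC orthC by auto
    finally have "Nn m (q - p) = 0" using Re_hinner_n[OF Hmn_diff[OF m qH pH]] by simp
    then have "q - p = (\<lambda>_ _. 0)" by (rule Nn_zero[OF m Hmn_diff[OF m qH pH]])
    then have "q i \<alpha> = p i \<alpha>" for i \<alpha> by (metis (no_types, lifting) fun_diff_def eq_iff_diff_eq_0)
    then show "q = p" by (intro ext)
  qed
  then show ?thesis unfolding P_ImMzstar_def V_def p_def .
qed

lemma vand: assumes k: "k \<ge> 1" and m: "m \<ge> 1"
  shows "(\<Sum>j\<le>k. (-1)^j * of_nat (m choose j) * of_nat ((m + k - 1 - j) choose (k - j)) :: complex) = 0"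
proof -
  have V: "(\<Sum>j\<in>{0..k}. ((of_nat m :: complex) gchoose j) * ((- of_nat m) gchoose (k - j))) = 0"
    using gbinomial_Vandermonde[of "of_nat m :: complex" "- of_nat m" k] k by (simp add: gbinomial_0_left)
  have each: "((- of_nat m :: complex) gchoose (k - j)) = (-1)^(k-j) * of_nat ((m + k - 1 - j) choose (k - j))"
    if j: "j \<le> k" for j
  proof -
    have e: "(of_nat (k - j) - (- of_nat m) - 1 :: complex) = of_nat (m + k - 1 - j)"
      using j m by (simp add: of_nat_diff)
    show ?thesis using gbinomial_negated_upper[of "- of_nat m :: complex" "k - j"]
      unfolding e binomial_gbinomial by simp
  qed
  have sgn: "(-1::complex)^k * (-1)^(k-j) = (-1)^j" if j: "j \<le> k" for j
  proof -
    have "(-1::complex)^k * (-1)^(k-j) = (-1)^(k + (k-j))" by (simp add: power_add)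
    also have "k + (k - j) = j + 2 * (k - j)" using j by simp
    also have "(-1::complex)^(j + 2 * (k - j)) = (-1)^j * ((-1)^2)^(k-j)" by (simp only: power_add power_mult)
    also have "\<dots> = (-1)^j" by simp
    finally show ?thesis .
  qed
  have "(\<Sum>j\<le>k. (-1)^j * of_nat (m choose j) * of_nat ((m + k - 1 - j) choose (k - j)) :: complex)
      = (-1)^k * (\<Sum>j\<in>{0..k}. ((of_nat m :: complex) gchoose j) * ((- of_nat m) gchoose (k - j)))"
    unfolding sum_distrib_left atLeast0AtMost
  proof (rule sum.cong)
    fix j assume "j \<in> {..k}"
    then have j: "j \<le> k" by simp
    have "(-1::complex)^k * ((of_nat m gchoose j) * ((- of_nat m) gchoose (k - j)))
        = ((-1)^k * (-1)^(k-j)) * of_nat (m choose j) * of_nat ((m + k - 1 - j) choose (k - j))"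
      unfolding each[OF j] binomial_gbinomial by (simp only: mult_ac)
    also have "\<dots> = (-1)^j * of_nat (m choose j) * of_nat ((m + k - 1 - j) choose (k - j))"
      unfolding sgn[OF j] ..
    finally show "(-1)^j * of_nat (m choose j) * of_nat ((m + k - 1 - j) choose (k - j))
        = (-1::complex)^k * ((of_nat m gchoose j) * ((- of_nat m) gchoose (k - j)))" by simp
  qed simp
  then show ?thesis using V by simp
qed

definition shiftw :: "nat \<Rightarrow> (nat \<Rightarrow> complex) \<Rightarrow> nat \<Rightarrow> complex" where
  "shiftw m w k = (if k = 0 then 0 else w (k - 1) * of_nat k / of_nat (m + k - 1))"

primrec sw :: "nat \<Rightarrow> nat \<Rightarrow> nat \<Rightarrow> complex" where
  "sw m 0 = (\<lambda>_. 1)"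
| "sw m (Suc j) = shiftw m (sw m j)"

lemma sw_closed: assumes m: "m \<ge> 1"
  shows "sw m j k = of_nat (k choose j) / of_nat ((m + k - 1) choose j)"
proof (induction j arbitrary: k)
  case 0 then show ?case by simp
next
  case (Suc j)
  show ?case
  proof (cases k)
    case 0 then show ?thesis by (simp add: shiftw_def)
  next
    case (Suc k')
    define n where "n = m + k' - 1"
    have n: "Suc n = m + k'" unfolding n_def using m by simp
    have mk: "m + k - 1 = Suc n" using n Suc by simp
    have b1: "of_nat (Suc j) * of_nat (Suc k' choose Suc j) = (of_nat (Suc k') * of_nat (k' choose j) :: complex)"
      using Suc_times_binomial[of j k'] by (metis of_nat_mult)
    have b2: "of_nat (Suc j) * of_nat (Suc n choose Suc j) = (of_nat (Suc n) * of_nat (n choose j) :: complex)"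
      using Suc_times_binomial[of j n] by (metis of_nat_mult)
    have "sw m (Suc j) k = of_nat (k' choose j) / of_nat (n choose j) * of_nat (Suc k') / of_nat (Suc n)"
      unfolding sw.simps shiftw_def Suc.IH using Suc n by (simp add: n_def)
    also have "\<dots> = of_nat (Suc k' choose Suc j) / of_nat (Suc n choose Suc j)"
    proof (cases "n choose j = 0")
      case True
      then have z: "Suc n choose Suc j = 0" using b2 by (metis mult_zero_right of_nat_eq_0_iff mult_eq_0_iff nat.distinct(1) of_nat_0)
      show ?thesis unfolding True z by simp
    next
      case False
      have h: "\<And>s x y. (s::complex) \<noteq> 0 \<Longrightarrow> s * x = y \<Longrightarrow> x = y / s" by (simp add: field_simps)
      have s0: "of_nat (Suc j) \<noteq> (0::complex)" by (rule of_nat_neq_0)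
      have A: "of_nat (Suc k' choose Suc j) = (of_nat (Suc k') * of_nat (k' choose j) / of_nat (Suc j) :: complex)"
        by (rule h[OF s0 b1])
      have B: "of_nat (Suc n choose Suc j) = (of_nat (Suc n) * of_nat (n choose j) / of_nat (Suc j) :: complex)"
        by (rule h[OF s0 b2])
      have g: "\<And>a b c d s. (s::complex) \<noteq> 0 \<Longrightarrow> d \<noteq> 0 \<Longrightarrow> c \<noteq> 0 \<Longrightarrow> b / d * a / c = (a * b / s) / (c * d / s)"
        by (simp add: field_simps)
      have "of_nat (n choose j) \<noteq> (0::complex)" using False by simp
      moreover have "of_nat (Suc n) \<noteq> (0::complex)" by (rule of_nat_neq_0)
      ultimately show ?thesis unfolding A B by (rule g[OF s0])
    qed
    finally have eq: "sw m (Suc j) k = of_nat (Suc k' choose Suc j) / of_nat (Suc n choose Suc j)" .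
    have mk': "m + Suc k' - 1 = Suc n" using n by simp
    show ?thesis using eq unfolding Suc mk' .
  qed
qed

lemma main_ident: assumes m: "m \<ge> 1" and k: "k \<ge> 1"
  shows "(\<Sum>j<m. (-1)^j * of_nat (m choose (j+1)) * sw m (Suc j) k) = 1"
proof -
  define M where "M = m + k - 1"
  define a :: "nat \<Rightarrow> complex" where "a j = of_nat (k choose j) / of_nat (M choose j)" for j
  have sa: "sw m j k = a j" for j unfolding a_def M_def by (rule sw_closed[OF m])
  define t where "t j = (-1)^j * of_nat (m choose j) * a j" for j
  have kM: "k \<le> M" unfolding M_def using m by simp
  have T: "(\<Sum>j\<le>m. t j) = 0"
  proof -
    have "(\<Sum>j\<le>m. t j) = (\<Sum>j\<le>m + k. t j)"
      by (rule sum.mono_neutral_left) (auto simp: t_def)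
    also have "\<dots> = (\<Sum>j\<le>k. t j)"
      by (rule sum.mono_neutral_right) (auto simp: t_def a_def)
    also have "\<dots> = (\<Sum>j\<le>k. (-1)^j * of_nat (m choose j) * of_nat ((m + k - 1 - j) choose (k - j))) / of_nat (M choose k)"
      unfolding sum_divide_distrib
    proof (rule sum.cong)
      fix j assume "j \<in> {..k}"
      then have j: "j \<le> k" by simp
      have cm: "(M choose k) * (k choose j) = (M choose j) * ((M - j) choose (k - j))"
        by (rule choose_mult[OF j kM])
      have nz: "M choose j \<noteq> 0" "M choose k \<noteq> 0" using j kM by auto
      have "a j = of_nat ((M - j) choose (k - j)) / of_nat (M choose k)"
      proof -
        have "(of_nat (M choose k) :: complex) * of_nat (k choose j) = of_nat (M choose j) * of_nat ((M - j) choose (k - j))"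
          using cm by (metis of_nat_mult)
        then show ?thesis unfolding a_def using nz by (simp add: field_simps)
      qed
      moreover have "M - j = m + k - 1 - j" unfolding M_def ..
      ultimately show "t j = (-1)^j * of_nat (m choose j) * of_nat ((m + k - 1 - j) choose (k - j)) / of_nat (M choose k)"
        unfolding t_def by simp
    qed simp
    also have "\<dots> = 0" using vand[OF k m] by simp
    finally show ?thesis .
  qed
  obtain m' where m': "m = Suc m'" using m by (cases m) auto
  have "(\<Sum>j\<le>m. t j) = t 0 + (\<Sum>j<m. t (Suc j))"
    unfolding m' sum.atMost_Suc_shift lessThan_Suc_atMost ..
  also have "t 0 = 1" unfolding t_def a_def by simp
  also have "(\<Sum>j<m. t (Suc j)) = - (\<Sum>j<m. (-1)^j * of_nat (m choose (j+1)) * sw m (Suc j) k)"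
    unfolding sum_negf[symmetric] t_def sa by (rule sum.cong) auto
  finally show ?thesis using T by simp
qed

lemma Mzpow_Mzpow: "Mzpow a (Mzpow b h) = Mzpow (\<lambda>k. a k + b k) h"
proof
  fix \<alpha>
  show "Mzpow a (Mzpow b h) \<alpha> = Mzpow (\<lambda>k. a k + b k) h \<alpha>"
  proof (cases "\<forall>i. a i + b i \<le> \<alpha> i")
    case True
    have "a i \<le> \<alpha> i \<and> b i \<le> \<alpha> i - a i" for i using True[rule_format, of i] by arith
    then have "\<forall>i. a i \<le> \<alpha> i" "\<forall>i. b i \<le> \<alpha> i - a i" by auto
    moreover have "(\<lambda>i. \<alpha> i - a i - b i) = (\<lambda>i. \<alpha> i - (a i + b i))" by (simp add: diff_diff_left)
    ultimately show ?thesis using True unfolding Mzpow_def by simp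
  next
    case False
    then obtain i where i: "\<not> a i + b i \<le> \<alpha> i" by auto
    have "\<not> ((\<forall>i. a i \<le> \<alpha> i) \<and> (\<forall>i. b i \<le> \<alpha> i - a i))"
    proof
      assume "(\<forall>i. a i \<le> \<alpha> i) \<and> (\<forall>i. b i \<le> \<alpha> i - a i)"
      then have "a i \<le> \<alpha> i" "b i \<le> \<alpha> i - a i" by auto
      then show False using i by arith
    qed
    then show ?thesis using False unfolding Mzpow_def by auto
  qed
qed

lemma Mz_Mzpow_comm: "Mz i (Mzpow \<gamma> h) = Mzpow \<gamma> (Mz i h)"
  unfolding Mz_def Mzpow_Mzpow by (simp add: add.commute)

lemma Mzpow_sum: "(\<Sum>l\<in>I. Mzpow \<gamma> (h l) \<alpha>) = Mzpow \<gamma> (\<lambda>\<beta>. \<Sum>l\<in>I. h l \<beta>) \<alpha>"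
  unfolding Mzpow_def by (cases "\<forall>i. \<gamma> i \<le> \<alpha> i") (simp_all del: not_all)

lemma sum_Mz_diag_mzadj:
  "(\<Sum>l\<in>UNIV. Mz l (diag w (mzadj m l f)) \<beta>) = diag (shiftw m w) f \<beta>"
proof -
  have "(\<Sum>l\<in>UNIV. Mz l (diag w (mzadj m l f)) \<beta>) = w (mabs \<beta> - 1) * (\<Sum>l\<in>UNIV. Mz l (mzadj m l f) \<beta>)"
    unfolding Mz_diag sum_distrib_left ..
  also have "\<dots> = w (mabs \<beta> - 1) * (f \<beta> * of_nat (mabs \<beta>) / of_nat (m + mabs \<beta> - 1))"
    unfolding sum_Mz_mzadj ..
  also have "\<dots> = diag (shiftw m w) f \<beta>"
    unfolding diag_def shiftw_def by simp
  finally show ?thesis .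
qed

lemma sigma_diag: assumes m: "m \<ge> 1" and Y: "\<And>g. g \<in> Hm m \<Longrightarrow> Y g = Mzpow \<gamma> (diag w g)"
  and f: "f \<in> Hm m"
  shows "sigma m Y f = Mzpow \<gamma> (diag (shiftw m w) f)"
proof
  fix \<alpha>
  have "sigma m Y f \<alpha> = (\<Sum>i\<in>UNIV. Mz i (Mzpow \<gamma> (diag w (mzadj m i f))) \<alpha>)"
    unfolding sigma_def using Mz_adj_eq[OF m f] Y[OF Hm_mzadj[OF m f]] by simp
  also have "\<dots> = (\<Sum>i\<in>UNIV. Mzpow \<gamma> (Mz i (diag w (mzadj m i f))) \<alpha>)"
    unfolding Mz_Mzpow_comm ..
  also have "\<dots> = Mzpow \<gamma> (\<lambda>\<beta>. \<Sum>i\<in>UNIV. Mz i (diag w (mzadj m i f)) \<beta>) \<alpha>"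
    by (rule Mzpow_sum)
  also have "(\<lambda>\<beta>. \<Sum>i\<in>UNIV. Mz i (diag w (mzadj m i f)) \<beta>) = diag (shiftw m w) f"
    using sum_Mz_diag_mzadj by blast
  finally show "sigma m Y f \<alpha> = Mzpow \<gamma> (diag (shiftw m w) f) \<alpha>" .
qed

lemma sigma_pow: assumes m: "m \<ge> 1"
  shows "f \<in> Hm m \<Longrightarrow> (sigma m ^^ j) (Mzpow \<gamma>) f = Mzpow \<gamma> (diag (sw m j) f)"
proof (induction j arbitrary: f)
  case 0 then show ?case by (simp add: diag_def)
next
  case (Suc j)
  show ?case unfolding funpow.simps o_def sw.simps
    by (rule sigma_diag[OF m _ Suc.prems]) (rule Suc.IH)
qed

definition cw :: "nat \<Rightarrow> nat \<Rightarrow> complex" where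
  "cw m k = (\<Sum>j<m. (-1)^j * of_nat (m choose (j + 1)) * sw m j k)"

lemma binsum_eq: assumes m: "m \<ge> 1" and f: "f \<in> Hm m"
  shows "binsum m (Mzpow \<gamma>) f = Mzpow \<gamma> (diag (cw m) f)"
proof
  fix \<alpha>
  have "binsum m (Mzpow \<gamma>) f \<alpha> = (\<Sum>j<m. (-1)^j * of_nat (m choose (j + 1)) * Mzpow \<gamma> (diag (sw m j) f) \<alpha>)"
    unfolding binsum_def using sigma_pow[OF m f] by simp
  also have "\<dots> = Mzpow \<gamma> (diag (cw m) f) \<alpha>"
    unfolding Mzpow_def diag_def cw_def by (cases "\<forall>i. \<gamma> i \<le> \<alpha> i") (simp_all add: sum_distrib_right mult.assoc del: not_all)
  finally show "binsum m (Mzpow \<gamma>) f \<alpha> = Mzpow \<gamma> (diag (cw m) f) \<alpha>" .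
qed

lemma sw_bound: assumes m: "m \<ge> 1" shows "cmod (sw m j k) \<le> 1"
proof (induction j arbitrary: k)
  case 0 then show ?case by simp
next
  case (Suc j)
  show ?case
  proof (cases "k = 0")
    case True then show ?thesis by (simp add: shiftw_def)
  next
    case False
    have r: "real k / real (m + k - 1) \<le> 1" using False m by simp
    have "sw m (Suc j) k = sw m j (k - 1) * (of_nat k / of_nat (m + k - 1))"
      using False by (simp add: shiftw_def)
    then have "cmod (sw m (Suc j) k) = cmod (sw m j (k - 1)) * (real k / real (m + k - 1))"
      by (simp only: norm_mult norm_divide norm_of_nat)
    also have "\<dots> \<le> 1 * 1" using Suc.IH[of "k - 1"] r by (intro mult_mono) auto
    finally show ?thesis by simp
  qed
qed

lemma cw_bound: assumes m: "m \<ge> 1" shows "cmod (cw m k) \<le> (\<Sum>j<m. real (m choose (j + 1)))"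
  unfolding cw_def
proof (rule order_trans[OF norm_sum sum_mono])
  fix j
  show "cmod ((-1)^j * of_nat (m choose (j + 1)) * sw m j k) \<le> real (m choose (j + 1))"
    using sw_bound[OF m, of j k] by (simp add: norm_mult norm_power mult_left_le)
qed

lemma shiftw_cw: assumes m: "m \<ge> 1" and k: "k \<ge> 1" shows "shiftw m (cw m) k = 1"
proof -
  define X :: complex where "X = of_nat k / of_nat (m + k - 1)"
  have e: "sw m (Suc j) k = sw m j (k - 1) * X" for j using k unfolding X_def by (simp add: shiftw_def)
  have "shiftw m (cw m) k = cw m (k - 1) * X" using k unfolding X_def by (simp add: shiftw_def)
  also have "\<dots> = (\<Sum>j<m. (-1)^j * of_nat (m choose (j + 1)) * sw m (Suc j) k)"
    unfolding cw_def e sum_distrib_right by (simp add: mult.assoc)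
  also have "\<dots> = 1" using main_ident[OF m k] by simp
  finally show ?thesis .
qed

theorem lemma1:
  fixes m :: nat and \<gamma> :: "'n::finite \<Rightarrow> nat"
  assumes "m \<ge> 1"
  shows "\<forall>F\<in>Hmn m. Mrow'_adj m (Mzpow \<gamma> (Mrow' m F))
           = P_ImMzstar m (oplus_n (binsum m (Mzpow \<gamma>)) (P_ImMzstar m F))"
proof
  fix F :: "'n \<Rightarrow> 'n coeffs"
  assume F: "F \<in> Hmn m"
  note m = assms
  define u where "u = delta m (Mrow F)"
  have u: "u \<in> Hm m" unfolding u_def by (rule Hm_delta[OF m Hm_Mrow[OF m F]])
  have gu: "Mzpow \<gamma> u \<in> Hm m" by (rule Hm_Mzpow[OF m u])
  have L: "Mrow'_adj m (Mzpow \<gamma> (Mrow' m F)) = (\<lambda>i. mzadj m i (delta m (Mzpow \<gamma> u)))"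
    unfolding Mrow'_def u_def[symmetric] by (rule Mrow'_adj_eq[OF m gu])
  have PF: "P_ImMzstar m F = (\<lambda>l. mzadj m l u)" unfolding u_def by (rule P_eq[OF m F])
  define G where "G = (\<lambda>l. Mzpow \<gamma> (diag (cw m) (mzadj m l u)))"
  have OG: "oplus_n (binsum m (Mzpow \<gamma>)) (P_ImMzstar m F) = G"
    unfolding PF oplus_n_def G_def using binsum_eq[OF m Hm_mzadj[OF m u]] by simp
  have G: "G \<in> Hmn m" unfolding G_def Hmn_def
    using Hm_Mzpow[OF m Hm_diag[OF m Hm_mzadj[OF m u] cw_bound[OF m]]] by simp
  have du: "diag (shiftw m (cw m)) u = u"
  proof
    fix \<beta>
    show "diag (shiftw m (cw m)) u \<beta> = u \<beta>"
    proof (cases "mabs \<beta> = 0")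
      case True
      have "Mrow F \<beta> = 0" unfolding Mrow_def using mabs0[OF True] by (simp add: Mz_apply)
      then have "u \<beta> = 0" unfolding u_def delta_def by simp
      then show ?thesis unfolding diag_def by simp
    next
      case False
      then show ?thesis unfolding diag_def using shiftw_cw[OF m, of "mabs \<beta>"] by simp
    qed
  qed
  have MG: "Mrow G = Mzpow \<gamma> u"
  proof
    fix \<alpha>
    have "Mrow G \<alpha> = (\<Sum>l\<in>UNIV. Mzpow \<gamma> (Mz l (diag (cw m) (mzadj m l u))) \<alpha>)"
      unfolding Mrow_def G_def Mz_Mzpow_comm ..
    also have "\<dots> = Mzpow \<gamma> (\<lambda>\<beta>. \<Sum>l\<in>UNIV. Mz l (diag (cw m) (mzadj m l u)) \<beta>) \<alpha>"
      by (rule Mzpow_sum)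
    also have "(\<lambda>\<beta>. \<Sum>l\<in>UNIV. Mz l (diag (cw m) (mzadj m l u)) \<beta>) = u"
      unfolding sum_Mz_diag_mzadj du ..
    finally show "Mrow G \<alpha> = Mzpow \<gamma> u \<alpha>" .
  qed
  show "Mrow'_adj m (Mzpow \<gamma> (Mrow' m F)) = P_ImMzstar m (oplus_n (binsum m (Mzpow \<gamma>)) (P_ImMzstar m F))"
    unfolding L OG P_eq[OF m G] MG ..
qed

end
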